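(* Let $\mathbb{S}$ be a collection of $n$ subsets of $\{1,\dots,m\}$ with $n>m$, each $\mathcal{J}\in\mathbb{S}$ of size $l$. Then $$\max_{\mathcal{J},\mathcal{J}'\in\mathbb{S},\,\mathcal{J}\ne\mathcal{J}'}|\mathcal{J}\cap\mathcal{J}'|\ \ge\ \frac{l^2}{m}.$$ Moreover, if $n=2(m-1)$ and equality holds in this bound, then $\mathbb{S}$ can be partitioned into $m-1$ pairs, each pair consisting of two disjoint subsets of size $m/2$. *)

theory Defs
  imports Complex_Main "HOL-Library.Disjoint_Sets"
begin

definition max_pair_intersection :: "nat set set \<Rightarrow> nat" where
  "max_pair_intersection S =
     Max {card (J \<inter> J') | J J'. J \<in> S \<and> J' \<in> S \<and> J \<noteq> J'}"

end

theory Submission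
  imports Defs "HOL-Library.Function_Algebras"
begin

definition sc :: "real \<Rightarrow> (nat \<Rightarrow> real) \<Rightarrow> (nat \<Rightarrow> real)" where
  "sc c f = (\<lambda>i. c * f i)"

lemma sc_apply: "sc c f i = c * f i" by (simp add: sc_def)

interpretation fv: module sc
  by unfold_locales (auto simp: sc_def fun_eq_iff sc_apply algebra_simps)



definition ip :: "nat \<Rightarrow> (nat \<Rightarrow> real) \<Rightarrow> (nat \<Rightarrow> real) \<Rightarrow> real" where
  "ip m f g = (\<Sum>i=1..m. f i * g i)"

lemma ip_sym: "ip m f g = ip m g f" by (simp add: ip_def mult.commute)
lemma ip_add: "ip m (f + g) h = ip m f h + ip m g h" by (simp add: ip_def algebra_simps sum.distrib)
lemma ip_diff: "ip m (f - g) h = ip m f h - ip m g h" by (simp add: ip_def algebra_simps sum_subtractf)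
lemma ip_sc: "ip m (sc c f) h = c * ip m f h" by (simp add: ip_def sum_distrib_left algebra_simps sc_apply)
lemma ip_add2: "ip m h (f + g) = ip m h f + ip m h g" by (simp add: ip_def algebra_simps sum.distrib)
lemma ip_diff2: "ip m h (f - g) = ip m h f - ip m h g" by (simp add: ip_def algebra_simps sum_subtractf)
lemma ip_sc2: "ip m h (sc c f) = c * ip m h f" by (simp add: ip_def sum_distrib_left algebra_simps sc_apply)
lemma ip_zero[simp]: "ip m 0 h = 0" "ip m h 0 = 0" by (simp_all add: ip_def)
lemma ip_nonneg: "ip m f f \<ge> 0" by (simp add: ip_def sum_nonneg)
lemma ip_zero_any: assumes "ip m f f = 0" shows "ip m f g = 0"
proof -
  have "\<forall>i\<in>{1..m}. f i * f i = 0"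
    using assms unfolding ip_def by (subst sum_nonneg_eq_0_iff[symmetric]) auto
  then show ?thesis unfolding ip_def by auto
qed

definition proj :: "nat \<Rightarrow> (nat \<Rightarrow> real) \<Rightarrow> (nat \<Rightarrow> real) \<Rightarrow> (nat \<Rightarrow> real)" where
  "proj m x y = y - sc (ip m y x / ip m x x) x"

lemma proj_ip: assumes "ip m x x > 0"
  shows "ip m (proj m x y) (proj m x z) = ip m y z - ip m y x * ip m z x / ip m x x"
proof -
  define a where "a = ip m y x / ip m x x"
  define b where "b = ip m z x / ip m x x"
  have e: "ip m (proj m x y) (proj m x z) = ip m y z - b * ip m y x - a * (ip m x z - b * ip m x x)"
    unfolding proj_def a_def[symmetric] b_def[symmetric] ip_diff ip_diff2 ip_sc ip_sc2 by (simp add: algebra_simps)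
  have "ip m x z = ip m z x" by (rule ip_sym)
  hence "a * (ip m x z - b * ip m x x) = 0" unfolding a_def b_def using assms by simp
  moreover have "b * ip m y x = ip m y x * ip m z x / ip m x x" unfolding b_def by simp
  ultimately show ?thesis using e by simp
qed

lemma proj_ip_x: assumes "ip m x x > 0"
  shows "ip m (proj m x y) x = 0"
  using assms unfolding proj_def by (simp add: ip_diff ip_sc)

lemma proj_lin: "proj m x (sc c u + v) = sc c (proj m x u) + proj m x v"
  unfolding proj_def by (simp add: ip_add ip_sc fun_eq_iff sc_apply algebra_simps add_divide_distrib)

lemma proj_span: assumes "y \<in> fv.span B" shows "proj m x y \<in> fv.span (proj m x ` B)"
  using assms
proof (induction rule: fv.span_induct_alt)
  case base
  have "proj m x 0 = 0" unfolding proj_def by (simp add: fun_eq_iff sc_apply)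
  then show ?case using fv.span_zero by metis
next
  case (step c u y)
  then show ?case unfolding proj_lin
    by (intro fv.span_add fv.span_scale) (auto intro: fv.span_base)
qed

lemma proj_add: "proj m x (a + b) = proj m x a + proj m x b"
  unfolding proj_def by (simp add: ip_add fun_eq_iff sc_apply algebra_simps add_divide_distrib)
lemma proj_sc: "proj m x (sc c a) = sc c (proj m x a)"
  unfolding proj_def by (simp add: ip_sc fun_eq_iff sc_apply algebra_simps)
lemma proj_sum: "proj m x (\<Sum>v\<in>B. sc (u v) v) = (\<Sum>v\<in>B. sc (u v) (proj m x v))"
proof (induction B rule: infinite_finite_induct)
  case (infinite A)
  then show ?case unfolding proj_def by (simp add: fun_eq_iff sc_apply)
next
  case empty
  then show ?case unfolding proj_def by (simp add: fun_eq_iff sc_apply)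
next
  case (insert a A)
  then show ?case by (simp only: sum.insert[OF insert(1,2)] proj_add proj_sc insert(3))
qed

lemma reduce:
  assumes fin: "finite B" and xs: "x \<in> fv.span B" and pos: "ip m x x > 0"
  shows "\<exists>B'. finite B' \<and> card B' < card B \<and> (\<forall>y\<in>fv.span B. proj m x y \<in> fv.span B')"
proof -
  obtain u where xu: "x = (\<Sum>v\<in>B. sc (u v) v)"
    using xs fv.span_finite[OF fin] by auto
  have "x \<noteq> 0" using pos by auto
  then obtain b0 where b0: "b0 \<in> B" "u b0 \<noteq> 0"
    using xu by (metis (no_types, lifting) fv.scale_zero_left sum.neutral)
  define Q where "Q = proj m x"
  have "Q x = 0" unfolding Q_def proj_def using pos by (simp add: fun_eq_iff sc_apply)
  hence "(\<Sum>v\<in>B. sc (u v) (Q v)) = 0" using xu proj_sum unfolding Q_def by metis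
  moreover have "(\<Sum>v\<in>B. sc (u v) (Q v)) = sc (u b0) (Q b0) + (\<Sum>v\<in>B-{b0}. sc (u v) (Q v))"
    using fin b0 by (simp add: sum.remove)
  ultimately have eq: "sc (u b0) (Q b0) = - (\<Sum>v\<in>B-{b0}. sc (u v) (Q v))"
    by (simp add: eq_neg_iff_add_eq_0)
  have "Q b0 = sc (1 / u b0) (sc (u b0) (Q b0))" using b0 by (simp add: fun_eq_iff sc_apply)
  also have "\<dots> = sc (1 / u b0) (- (\<Sum>v\<in>B-{b0}. sc (u v) (Q v)))" using eq by simp
  finally have qb: "Q b0 = sc (1 / u b0) (- (\<Sum>v\<in>B-{b0}. sc (u v) (Q v)))" .
  have "(\<Sum>v\<in>B-{b0}. sc (u v) (Q v)) \<in> fv.span (Q ` (B - {b0}))"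
    by (intro fv.span_sum fv.span_scale fv.span_base) auto
  hence "Q b0 \<in> fv.span (Q ` (B - {b0}))" unfolding qb
    by (intro fv.span_scale fv.span_neg)
  hence sub: "Q ` B \<subseteq> fv.span (Q ` (B - {b0}))"
    by (auto intro: fv.span_base)
  have "fv.span (Q ` B) \<subseteq> fv.span (Q ` (B - {b0}))"
    using fv.span_mono[OF sub] fv.span_span by blast
  moreover have "card (Q ` (B - {b0})) < card B"
  proof -
    have "card (Q ` (B - {b0})) \<le> card (B - {b0})" using fin by (intro card_image_le) auto
    moreover have "card (B - {b0}) < card B" using fin b0 by (intro psubset_card_mono) auto
    ultimately show ?thesis by linarith
  qed
  ultimately show ?thesis
    using proj_span[of _ B m x] fin unfolding Q_def by (intro exI[of _ "proj m x ` (B - {b0})"]) auto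
qed

lemma strict_bound:
  "finite B \<Longrightarrow> X \<subseteq> fv.span B \<Longrightarrow> finite X \<Longrightarrow>
   (\<forall>y\<in>X. \<forall>z\<in>X. y \<noteq> z \<longrightarrow> ip m y z < 0) \<Longrightarrow> card X \<le> card B + 1"
proof (induction "card B" arbitrary: B X rule: less_induct)
  case less
  show ?case
  proof (cases "X = {}")
    case True thus ?thesis by simp
  next
    case False
    then obtain x where x: "x \<in> X" by blast
    show ?thesis
    proof (cases "ip m x x = 0")
      case True
      have "X = {x}"
      proof (rule ccontr)
        assume "X \<noteq> {x}"
        then obtain y where "y \<in> X" "y \<noteq> x" using x by blast
        hence "ip m y x < 0" using less.prems(4) x by blast
        moreover have "ip m x y = 0" using ip_zero_any[OF True] .
        ultimately show False using ip_sym[of m x y] by simp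
      qed
      then show ?thesis by simp
    next
      case False
      hence pos: "ip m x x > 0" using ip_nonneg[of m x] by linarith
      obtain B' where B': "finite B'" "card B' < card B" "\<forall>y\<in>fv.span B. proj m x y \<in> fv.span B'"
        using reduce[OF less.prems(1) _ pos] x less.prems(2) by blast
      define Y where "Y = proj m x ` (X - {x})"
      have neg: "ip m (proj m x y) (proj m x z) < 0" if "y \<in> X - {x}" "z \<in> X - {x}" "y \<noteq> z" for y z
      proof -
        have a: "ip m y x < 0" "ip m z x < 0" "ip m y z < 0" using less.prems(4) that x by auto
        have "ip m y x * ip m z x / ip m x x > 0" using a pos by (simp add: mult_neg_neg)
        then show ?thesis unfolding proj_ip[OF pos] using a by linarith
      qed
      have inj: "inj_on (proj m x) (X - {x})"
      proof (rule inj_onI, rule ccontr)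
        fix y z assume h: "y \<in> X - {x}" "z \<in> X - {x}" "proj m x y = proj m x z" "y \<noteq> z"
        have "ip m (proj m x y) (proj m x z) < 0" using neg h by blast
        moreover have "ip m (proj m x y) (proj m x z) \<ge> 0" using h(3) ip_nonneg by metis
        ultimately show False by linarith
      qed
      have "card Y \<le> card B' + 1"
        apply (rule less.hyps[OF B'(2) B'(1)])
        using B'(3) less.prems(2,3) neg unfolding Y_def by auto
      moreover have "card Y = card X - 1" unfolding Y_def card_image[OF inj]
        using x less.prems(3) by simp
      ultimately show ?thesis using B'(2) x less.prems(3) card_gt_0_iff by fastforce
    qed
  qed
qed

lemma zlem:
  assumes pos: "ip m x x > 0" and "ip m y y > 0" "ip m y x \<le> 0"
    and z: "ip m (proj m x y) (proj m x y) = 0"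
  shows "\<exists>c<0. \<forall>g. ip m y g = c * ip m x g"
proof -
  define c where "c = ip m y x / ip m x x"
  have e: "ip m y g = c * ip m x g" for g
    using ip_zero_any[OF z, of g] unfolding proj_def c_def by (simp add: ip_diff ip_sc)
  have "c \<le> 0" unfolding c_def using assms by (simp add: divide_nonpos_pos)
  moreover have "c \<noteq> 0" using e[of y] assms(2) by auto
  ultimately show ?thesis using e by (intro exI[of _ c]) auto
qed

lemma step:
  assumes fin: "finite B" and XB: "X \<subseteq> fv.span B" and finX: "finite X"
    and posX: "\<forall>y\<in>X. ip m y y > 0" and nn: "\<forall>y\<in>X. \<forall>z\<in>X. y \<noteq> z \<longrightarrow> ip m y z \<le> 0"
    and x: "x \<in> X"
  shows "\<exists>B' Y. finite B' \<and> card B' < card B \<and> Y \<subseteq> fv.span B' \<and> finite Y \<and>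
     (\<forall>y\<in>Y. ip m y y > 0) \<and> (\<forall>y\<in>Y. \<forall>z\<in>Y. y \<noteq> z \<longrightarrow> ip m y z \<le> 0) \<and>
     card X \<le> card Y + 2 \<and>
     ((\<forall>y\<in>X. y \<noteq> x \<longrightarrow> \<not>(\<exists>c<0. \<forall>g. ip m y g = c * ip m x g)) \<longrightarrow> card X \<le> card Y + 1)"
proof -
  have pos: "ip m x x > 0" using posX x by auto
  obtain B' where B': "finite B'" "card B' < card B" "\<forall>y\<in>fv.span B. proj m x y \<in> fv.span B'"
    using reduce[OF fin _ pos] x XB by blast
  define Z where "Z = {y \<in> X - {x}. ip m (proj m x y) (proj m x y) = 0}"
  define W where "W = X - {x} - Z"
  define Y where "Y = proj m x ` W"
  have zc: "\<exists>c<0. \<forall>g. ip m y g = c * ip m x g" if "y \<in> Z" for y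
    using that x posX nn pos unfolding Z_def by (intro zlem) auto
  have finZ: "finite Z" unfolding Z_def using finX by auto
  have cZ: "card Z \<le> 1"
  proof -
    have "a = b" if az: "a \<in> Z" and bz: "b \<in> Z" for a b
    proof (rule ccontr)
      assume ne: "a \<noteq> b"
      obtain c where c: "c < 0" "\<forall>g. ip m a g = c * ip m x g" using zc[OF az] by blast
      obtain d where d: "d < 0" "\<forall>g. ip m b g = d * ip m x g" using zc[OF bz] by blast
      have "ip m a b = c * (d * ip m x x)" using c(2) d(2) ip_sym[of m x b] by simp
      moreover have "c * (d * ip m x x) > 0" using c(1) d(1) pos by (simp add: mult_neg_neg mult_neg_pos zero_less_mult_iff)
      moreover have "ip m a b \<le> 0" using nn az bz ne unfolding Z_def by auto
      ultimately show False by linarith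
    qed
    then show ?thesis using card_le_Suc0_iff_eq[OF finZ] by auto
  qed
  have Wpos: "ip m (proj m x y) (proj m x y) > 0" if "y \<in> W" for y
    using that ip_nonneg[of m "proj m x y"] unfolding W_def Z_def by auto
  have nnW: "ip m (proj m x y) (proj m x z) \<le> 0" if "y \<in> W" "z \<in> W" "y \<noteq> z" for y z
  proof -
    have a: "ip m y x \<le> 0" "ip m z x \<le> 0" "ip m y z \<le> 0" using nn that x unfolding W_def by auto
    have "ip m y x * ip m z x / ip m x x \<ge> 0" using a pos by (simp add: zero_le_mult_iff)
    then show ?thesis unfolding proj_ip[OF pos] using a by linarith
  qed
  have inj: "inj_on (proj m x) W"
  proof (rule inj_onI, rule ccontr)
    fix y z assume h: "y \<in> W" "z \<in> W" "proj m x y = proj m x z" "y \<noteq> z"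
    have "ip m (proj m x y) (proj m x z) \<le> 0" using nnW h by blast
    moreover have "ip m (proj m x y) (proj m x z) > 0" using h(3) Wpos[OF h(1)] by metis
    ultimately show False by linarith
  qed
  have finW: "finite W" unfolding W_def using finX by auto
  have cY: "card Y = card W" unfolding Y_def using card_image[OF inj] .
  have cX: "card X = card W + card Z + 1"
  proof -
    have "card (X - {x}) = card X - 1" using card_Diff_singleton[OF x] .
    moreover have "card X > 0" using x finX card_gt_0_iff by blast
    ultimately have "card X = card (X - {x}) + 1" by linarith
    moreover have "card (X - {x}) = card W + card Z"
    proof -
      have zs: "Z \<subseteq> X - {x}" unfolding Z_def by blast
      have "card W = card (X - {x}) - card Z" unfolding W_def by (rule card_Diff_subset[OF finZ zs])
      moreover have "card Z \<le> card (X - {x})" using zs finX by (intro card_mono) auto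
      ultimately show ?thesis by linarith
    qed
    ultimately show ?thesis by simp
  qed
  have Znone: "(\<forall>y\<in>X. y \<noteq> x \<longrightarrow> \<not>(\<exists>c<0. \<forall>g. ip m y g = c * ip m x g)) \<longrightarrow> card Z = 0"
  proof
    assume H: "\<forall>y\<in>X. y \<noteq> x \<longrightarrow> \<not>(\<exists>c<0. \<forall>g. ip m y g = c * ip m x g)"
    have "Z = {}"
    proof (rule ccontr)
      assume "Z \<noteq> {}"
      then obtain y where y: "y \<in> Z" by blast
      hence "y \<in> X" "y \<noteq> x" unfolding Z_def by auto
      thus False using H zc[OF y] by blast
    qed
    thus "card Z = 0" by simp
  qed
  show ?thesis
    apply (rule exI[of _ B'], rule exI[of _ Y])
    using B' cY cX cZ Znone finW Wpos nnW XB unfolding Y_def W_def by auto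
qed

lemma nonneg_bound:
  "finite B \<Longrightarrow> X \<subseteq> fv.span B \<Longrightarrow> finite X \<Longrightarrow> (\<forall>y\<in>X. ip m y y > 0) \<Longrightarrow>
   (\<forall>y\<in>X. \<forall>z\<in>X. y \<noteq> z \<longrightarrow> ip m y z \<le> 0) \<Longrightarrow> card X \<le> 2 * card B"
proof (induction "card B" arbitrary: B X rule: less_induct)
  case less
  show ?case
  proof (cases "X = {}")
    case True thus ?thesis by simp
  next
    case False
    then obtain x where x: "x \<in> X" by blast
    obtain B' Y where h: "finite B'" "card B' < card B" "Y \<subseteq> fv.span B'" "finite Y"
      "\<forall>y\<in>Y. ip m y y > 0" "\<forall>y\<in>Y. \<forall>z\<in>Y. y \<noteq> z \<longrightarrow> ip m y z \<le> 0" "card X \<le> card Y + 2"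
      using step[OF less.prems x] by blast
    have "card Y \<le> 2 * card B'" using less.hyps[OF h(2) h(1) h(3) h(4) h(5) h(6)] .
    then show ?thesis using h(2) h(7) by linarith
  qed
qed

lemma eq_case:
  assumes "finite B" "X \<subseteq> fv.span B" "finite X" "\<forall>y\<in>X. ip m y y > 0"
   "\<forall>y\<in>X. \<forall>z\<in>X. y \<noteq> z \<longrightarrow> ip m y z \<le> 0" and x: "x \<in> X" and c: "card X = 2 * card B"
  shows "\<exists>y\<in>X. y \<noteq> x \<and> (\<exists>c<0. \<forall>g. ip m y g = c * ip m x g)"
proof (rule ccontr)
  assume na: "\<not> ?thesis"
  obtain B' Y where h: "finite B'" "card B' < card B" "Y \<subseteq> fv.span B'" "finite Y"
      "\<forall>y\<in>Y. ip m y y > 0" "\<forall>y\<in>Y. \<forall>z\<in>Y. y \<noteq> z \<longrightarrow> ip m y z \<le> 0"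
      "((\<forall>y\<in>X. y \<noteq> x \<longrightarrow> \<not>(\<exists>c<0. \<forall>g. ip m y g = c * ip m x g)) \<longrightarrow> card X \<le> card Y + 1)"
    using step[OF assms(1-5) x] by blast
  have "card Y \<le> 2 * card B'" using nonneg_bound[OF h(1) h(3) h(4) h(5) h(6)] .
  moreover have "card X \<le> card Y + 1" using h(7) na by blast
  ultimately show False using h(2) c by linarith
qed

definition ev :: "nat \<Rightarrow> nat \<Rightarrow> real" where "ev i = (\<lambda>j. if j = i then 1 else 0)"

definition wv :: "nat \<Rightarrow> nat \<Rightarrow> nat set \<Rightarrow> nat \<Rightarrow> real" where
  "wv m l J = (\<lambda>i. (if i \<in> J then 1 else 0) - (if i \<in> {1..m} then real l / real m else 0))"

lemma fsum_apply: "(\<Sum>i\<in>A. g i) j = (\<Sum>i\<in>A. g i j)"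
  by (induction A rule: infinite_finite_induct) auto

lemma cnt: "(J::nat set) \<subseteq> {1..m} \<Longrightarrow> (\<Sum>i=1..m. (if i \<in> J then 1 else 0::real)) = real (card J)"
proof -
  assume a: "J \<subseteq> {1..m}"
  have "(\<Sum>i\<in>{1..m} \<inter> J. 1::real) = (\<Sum>i=1..m. (if i \<in> J then 1 else 0::real))"
    by (rule sum.inter_restrict) simp
  moreover have "{1..m} \<inter> J = J" using a by auto
  ultimately show ?thesis by simp
qed

lemma ip_ev: "i \<in> {1..m} \<Longrightarrow> ip m f (ev i) = f i"
  unfolding ip_def ev_def by (simp add: if_distrib[of "\<lambda>x. f _ * x"] sum.delta cong: if_cong)

lemma ipw:
  assumes "J \<subseteq> {1..m}" "K \<subseteq> {1..m}" "card J = l" "card K = l" "m > 0"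
  shows "ip m (wv m l J) (wv m l K) = real (card (J \<inter> K)) - (real l)^2 / real m"
proof -
  define a where "a = real l / real m"
  have "ip m (wv m l J) (wv m l K) = (\<Sum>i=1..m. (if i \<in> J \<inter> K then 1 else 0) - a * (if i \<in> J then 1 else 0)
      - a * (if i \<in> K then 1 else 0) + a^2)"
    unfolding ip_def wv_def a_def using assms(5) by (intro sum.cong) (auto simp: power2_eq_square field_simps)
  also have "\<dots> = real (card (J \<inter> K)) - a * real l - a * real l + real m * a^2"
    using assms cnt[of "J \<inter> K" m, OF subset_trans[OF Int_lower1 assms(1)]] cnt[of J m] cnt[of K m]
    by (simp add: sum.distrib sum_subtractf sum_distrib_left[symmetric])
  also have "\<dots> = real (card (J \<inter> K)) - (real l)^2 / real m"
    unfolding a_def using assms(5) by (simp add: field_simps power2_eq_square)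
  finally show ?thesis .
qed

lemma inH:
  assumes m: "m > 0" and supp: "\<forall>i. i \<notin> {1..m} \<longrightarrow> f i = 0" and s: "(\<Sum>i=1..m. f i) = 0"
  shows "f \<in> fv.span ((\<lambda>i. ev i - ev m) ` {1..m-1})"
proof -
  obtain k where k: "m = Suc k" using m by (cases m) auto
  have fm: "(\<Sum>i=1..k. f i) = - f m" using s unfolding k by (simp add: sum.cl_ivl_Suc)
  have "f = (\<Sum>i\<in>{1..k}. sc (f i) (ev i - ev m))"
  proof
    fix j
    have "(\<Sum>i\<in>{1..k}. sc (f i) (ev i - ev m)) j = (\<Sum>i\<in>{1..k}. f i * ev i j - f i * ev m j)"
      unfolding fsum_apply by (rule sum.cong) (simp_all only: sc_apply minus_apply right_diff_distrib)
    also have "\<dots> = (\<Sum>i\<in>{1..k}. f i * ev i j) - (\<Sum>i\<in>{1..k}. f i) * ev m j"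
      by (simp only: sum_subtractf sum_distrib_right)
    also have "(\<Sum>i\<in>{1..k}. f i * ev i j) = (if j \<in> {1..k} then f j else 0)"
      unfolding ev_def by (simp add: if_distrib[of "\<lambda>x. f _ * x"] sum.delta' cong: if_cong)
    finally have e1: "(\<Sum>i\<in>{1..k}. sc (f i) (ev i - ev m)) j = (if j \<in> {1..k} then f j else 0) - (\<Sum>i\<in>{1..k}. f i) * ev m j" .
    have "f j = (if j \<in> {1..k} then f j else 0) - (\<Sum>i\<in>{1..k}. f i) * ev m j"
    proof (cases "j \<in> {1..k}")
      case True
      then have "ev m j = 0" unfolding ev_def k by auto
      then show ?thesis using True by simp
    next
      case False
      show ?thesis
      proof (cases "j = m")
        case True
        then show ?thesis using False fm unfolding ev_def k by simp
      next
        case F2: False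
        then have "f j = 0" using supp False unfolding k by auto
        moreover have "ev m j = 0" using F2 unfolding ev_def by auto
        ultimately show ?thesis using False by simp
      qed
    qed
    then show "f j = (\<Sum>i\<in>{1..k}. sc (f i) (ev i - ev m)) j" using e1 by simp
  qed
  also have "\<dots> \<in> fv.span ((\<lambda>i. ev i - ev m) ` {1..m-1})"
    unfolding k by (intro fv.span_sum fv.span_scale fv.span_base) auto
  finally show ?thesis .
qed

lemma comb:
  fixes a c :: real
  assumes "0 < a" "a < 1" "c < 0"
    and e: "(if P then 1 else 0) - a = c * ((if Q then 1 else 0) - a)"
  shows "P \<longleftrightarrow> \<not> Q"
proof -
  have h1: "c * (1 - a) < 0" using assms by (intro mult_neg_pos) auto
  have h2: "c * a < 0" using assms by (intro mult_neg_pos) auto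
  have h3: "c * (0 - a) = - (c * a)" by simp
  show ?thesis
  proof (cases P; cases Q)
    assume "P" "Q" then show ?thesis using e h1 assms by simp
  next
    assume "\<not>P" "\<not>Q" then show ?thesis using e h2 assms by simp
  qed auto
qed

lemma card_le1:
  assumes "finite S" "\<forall>J\<in>S. J = A" shows "card S \<le> 1"
proof -
  have "S \<subseteq> {A}" using assms(2) by blast
  hence "card S \<le> card {A}" by (intro card_mono) auto
  thus ?thesis by simp
qed

theorem corollary3p9:
  fixes S :: "nat set set" and m l n :: nat
  assumes subs: "\<forall>J\<in>S. J \<subseteq> {1..m}"
    and size: "\<forall>J\<in>S. card J = l"
    and cardS: "card S = n"
    and gt: "n > m"
  shows "real (max_pair_intersection S) \<ge> (real l)^2 / real m
       \<and> ((n = 2 * (m - 1) \<and> real (max_pair_intersection S) = (real l)^2 / real m) \<longrightarrow>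
           (\<exists>P. partition_on S P \<and> card P = m - 1 \<and>
               (\<forall>p\<in>P. \<exists>A B. p = {A, B} \<and> A \<noteq> B \<and> A \<inter> B = {}
                                \<and> 2 * card A = m \<and> 2 * card B = m)))"
proof -
  have finS: "finite S"
    using subs by (intro finite_subset[of S "Pow {1..m}"]) auto
  show ?thesis
  proof (cases "m = 0")
    case True
    then show ?thesis using gt by simp
  next
    case False
    hence m0: "m > 0" by simp
    define T where "T = {card (J \<inter> J') | J J'. J \<in> S \<and> J' \<in> S \<and> J \<noteq> J'}"
    have MT: "max_pair_intersection S = Max T" unfolding max_pair_intersection_def T_def ..
    have finT: "finite T"
    proof -
      have "T \<subseteq> (\<lambda>p. card (fst p \<inter> snd p)) ` (S \<times> S)" unfolding T_def by force
      thus ?thesis using finS by (meson finite_SigmaI finite_imageI finite_subset)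
    qed
    have two: "\<exists>J K. J \<in> S \<and> K \<in> S \<and> J \<noteq> K"
    proof (rule ccontr)
      assume "\<not> ?thesis"
      hence "card S \<le> 1" using card_le_Suc0_iff_eq[OF finS] by auto
      thus False using cardS gt m0 by linarith
    qed
    have Mge: "card (J \<inter> K) \<le> Max T" if "J \<in> S" "K \<in> S" "J \<noteq> K" for J K
      using finT that unfolding T_def by (intro Max_ge) blast+
    define w where "w = wv m l"
    define X where "X = w ` S"
    define BH where "BH = (\<lambda>i. ev i - ev m) ` {1..m-1}"
    have finBH: "finite BH" unfolding BH_def by simp
    have cBH: "card BH \<le> m - 1" unfolding BH_def using card_image_le[of "{1..m-1}" "\<lambda>i. ev i - ev m"] by simp
    have ipS: "ip m (w J) (w K) = real (card (J \<inter> K)) - (real l)^2 / real m" if "J \<in> S" "K \<in> S" for J K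
      unfolding w_def using ipw[of J m K l] subs size that m0 by auto
    have injw: "inj_on w S"
    proof (rule inj_onI)
      fix J K assume h: "J \<in> S" "K \<in> S" "w J = w K"
      have "\<forall>i. (i \<in> J) = (i \<in> K)"
      proof
        fix i
        have "w J i = w K i" using h(3) by simp
        thus "(i \<in> J) = (i \<in> K)" unfolding w_def wv_def by (auto split: if_splits)
      qed
      thus "J = K" by blast
    qed
    have cX: "card X = n" unfolding X_def using card_image[OF injw] cardS by simp
    have finX: "finite X" unfolding X_def using finS by simp
    have XH: "X \<subseteq> fv.span BH"
    proof
      fix y assume "y \<in> X"
      then obtain J where J: "J \<in> S" "y = w J" unfolding X_def by blast
      have Jsub: "J \<subseteq> {1..m}" using subs J(1) by blast
      have supp: "\<forall>i. i \<notin> {1..m} \<longrightarrow> w J i = 0" using Jsub unfolding w_def wv_def by (auto simp: subset_iff)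
      have "(\<Sum>i=1..m. w J i) = (\<Sum>i=1..m. (if i \<in> J then 1 else 0) - real l / real m)"
        unfolding w_def wv_def by (rule sum.cong) auto
      also have "\<dots> = (\<Sum>i=1..m. (if i \<in> J then 1 else 0)) - (\<Sum>i=1..m. real l / real m)"
        by (rule sum_subtractf)
      also have "\<dots> = 0" using cnt[of J m] subs size J(1) m0 by simp
      finally have "(\<Sum>i=1..m. w J i) = 0" .
      thus "y \<in> fv.span BH" using inH[OF m0 supp] J(2) unfolding BH_def by simp
    qed
    have part1: "(real l)^2 / real m \<le> real (max_pair_intersection S)"
    proof (rule ccontr)
      assume "\<not> ?thesis"
      hence lt: "real (Max T) < (real l)^2 / real m" unfolding MT by simp
      have "\<forall>y\<in>X. \<forall>z\<in>X. y \<noteq> z \<longrightarrow> ip m y z < 0"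
      proof (intro ballI impI)
        fix y z assume "y \<in> X" "z \<in> X" "y \<noteq> z"
        then obtain J K where JK: "J \<in> S" "K \<in> S" "y = w J" "z = w K" "J \<noteq> K" unfolding X_def by auto
        have "real (card (J \<inter> K)) \<le> real (Max T)" using Mge[OF JK(1,2,5)] by simp
        then show "ip m y z < 0" using ipS[OF JK(1,2)] lt unfolding JK(3,4) by linarith
      qed
      hence "card X \<le> card BH + 1" using strict_bound[OF finBH XH finX] by blast
      thus False using cX cBH gt m0 by linarith
    qed
    have part2: "(n = 2 * (m - 1) \<and> real (max_pair_intersection S) = (real l)^2 / real m) \<longrightarrow>
           (\<exists>P. partition_on S P \<and> card P = m - 1 \<and>
               (\<forall>p\<in>P. \<exists>A B. p = {A, B} \<and> A \<noteq> B \<and> A \<inter> B = {}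
                                \<and> 2 * card A = m \<and> 2 * card B = m))"
    proof (intro impI, elim conjE)
      assume nn: "n = 2 * (m - 1)" and eq: "real (max_pair_intersection S) = (real l)^2 / real m"
      have l0: "l > 0"
      proof (rule ccontr)
        assume "\<not> l > 0"
        hence "\<forall>J\<in>S. J = {}" using size subs by (metis card_0_eq finite_atLeastAtMost finite_subset neq0_conv)
        hence "card S \<le> 1" using card_le1[OF finS] by blast
        thus False using cardS gt m0 by linarith
      qed
      have lm: "l < m"
      proof (rule ccontr)
        assume "\<not> l < m"
        hence "\<forall>J\<in>S. J = {1..m}"
        proof (intro ballI)
          fix J assume J: "J \<in> S"
          have "card J \<le> m" using card_mono[of "{1..m}" J] subs J by simp
          hence "card J = card {1..m}" using size J \<open>\<not> l < m\<close> by simp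
          thus "J = {1..m}" using card_subset_eq[of "{1..m}" J] subs J by simp
        qed
        hence "card S \<le> 1" using card_le1[OF finS] by blast
        thus False using cardS gt m0 by linarith
      qed
      have posX: "\<forall>y\<in>X. ip m y y > 0"
      proof
        fix y assume "y \<in> X"
        then obtain J where J: "J \<in> S" "y = w J" unfolding X_def by blast
        have "ip m y y = real l - (real l)^2 / real m" using ipS[OF J(1) J(1)] J size by simp
        also have "\<dots> = real l * (real m - real l) / real m" using m0 by (simp add: field_simps power2_eq_square)
        also have "\<dots> > 0" using l0 lm m0 by simp
        finally show "ip m y y > 0" .
      qed
      have nnX: "\<forall>y\<in>X. \<forall>z\<in>X. y \<noteq> z \<longrightarrow> ip m y z \<le> 0"
      proof (intro ballI impI)
        fix y z assume "y \<in> X" "z \<in> X" "y \<noteq> z"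
        then obtain J K where JK: "J \<in> S" "K \<in> S" "y = w J" "z = w K" "J \<noteq> K" unfolding X_def by auto
        have "real (card (J \<inter> K)) \<le> real (Max T)" using Mge[OF JK(1,2,5)] by simp
        then show "ip m y z \<le> 0" using ipS[OF JK(1,2)] eq unfolding MT JK(3,4) by linarith
      qed
      have "card X \<le> 2 * card BH" using nonneg_bound[OF finBH XH finX posX nnX] .
      hence cBH2: "card X = 2 * card BH" using cX nn cBH by linarith
      define a where "a = real l / real m"
      have a0: "0 < a" "a < 1" unfolding a_def using l0 lm m0 by auto
      have compl: "{1..m} - J \<in> S" if J: "J \<in> S" for J
      proof -
        obtain y c where yc: "y \<in> X" "y \<noteq> w J" "c < 0" "\<forall>g. ip m y g = c * ip m (w J) g"
          using eq_case[OF finBH XH finX posX nnX _ cBH2, of "w J"] J unfolding X_def by blast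
        obtain K where K: "K \<in> S" "y = w K" using yc(1) unfolding X_def by blast
        have pt: "w K i = c * w J i" if "i \<in> {1..m}" for i
          using yc(4) ip_ev[OF that] K(2) by metis
        have "\<forall>i\<in>{1..m}. (i \<in> K) = (i \<notin> J)"
        proof
          fix i assume i: "i \<in> {1..m}"
          have "(if i \<in> K then 1 else 0) - a = c * ((if i \<in> J then 1 else 0) - a)"
            using pt[OF i] i unfolding w_def wv_def a_def by simp
          thus "(i \<in> K) = (i \<notin> J)" using comb[OF a0 yc(3)] by blast
        qed
        hence "K = {1..m} - J" using subs K(1) by blast
        thus ?thesis using K(1) by simp
      qed
      define C where "C J = {1..m} - J" for J
      have CC: "C (C J) = J" if "J \<in> S" for J using subs that unfolding C_def by auto
      have CS: "C J \<in> S" if "J \<in> S" for J using compl that unfolding C_def by simp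
      have CJ: "C J \<noteq> J" if "J \<in> S" for J
      proof
        assume "C J = J"
        hence "J = {}" unfolding C_def by blast
        thus False using size that l0 by auto
      qed
      obtain J0 where J0: "J0 \<in> S" using two by blast
      have twol: "2 * l = m"
      proof -
        have "card (C J0) = l" using size CS[OF J0] by simp
        moreover have "card (C J0) = m - l"
        proof -
          have s0: "J0 \<subseteq> {1..m}" using subs J0 by blast
          hence "finite J0" using finite_subset by blast
          thus ?thesis unfolding C_def using card_Diff_subset[OF _ s0] size J0 by simp
        qed
        ultimately show ?thesis using lm by linarith
      qed
      define P where "P = (\<lambda>J. {J, C J}) ` S"
      have part: "partition_on S P"
      proof (rule partition_onI)
        show "\<Union>P = S" unfolding P_def using CS by auto
      next
        fix p q assume pq: "p \<in> P" "q \<in> P" "p \<noteq> q"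
        then obtain J K where JK: "J \<in> S" "K \<in> S" "p = {J, C J}" "q = {K, C K}" unfolding P_def by auto
        show "disjnt p q"
        proof (rule ccontr)
          assume "\<not> disjnt p q"
          then obtain x where "x \<in> p" "x \<in> q" unfolding disjnt_def by blast
          hence "J = K \<or> J = C K \<or> C J = K \<or> C J = C K" using JK by auto
          hence "p = q" using JK CC by (metis insert_commute)
          thus False using pq by simp
        qed
      next
        show "{} \<notin> P" unfolding P_def by auto
      qed
      have c2: "card p = 2" if "p \<in> P" for p
        using that CJ unfolding P_def by (metis (no_types, lifting) card_2_iff imageE)
      have finp: "finite A" if "A \<in> P" for A using that unfolding P_def by auto
      have "card (\<Union>P) = sum card P" by (rule card_Union_disjoint[OF partition_onD2[OF part] finp])
      hence "card S = sum card P" using partition_onD1[OF part] by simp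
      also have "\<dots> = 2 * card P" using c2 by simp
      finally have cP: "card P = m - 1" using cardS nn by simp
      show "\<exists>P. partition_on S P \<and> card P = m - 1 \<and>
               (\<forall>p\<in>P. \<exists>A B. p = {A, B} \<and> A \<noteq> B \<and> A \<inter> B = {}
                                \<and> 2 * card A = m \<and> 2 * card B = m)"
      proof (intro exI[of _ P] conjI part cP ballI)
        fix p assume "p \<in> P"
        then obtain J where J: "J \<in> S" "p = {J, C J}" unfolding P_def by auto
        show "\<exists>A B. p = {A, B} \<and> A \<noteq> B \<and> A \<inter> B = {} \<and> 2 * card A = m \<and> 2 * card B = m"
        proof -
          have f1: "J \<noteq> C J" using CJ[OF J(1)] by simp
          have f2: "J \<inter> C J = {}" unfolding C_def by blast
          have f3: "2 * card J = m" using size J(1) twol by simp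
          have f4: "2 * card (C J) = m" using size CS[OF J(1)] twol by simp
          show ?thesis using J(2) f1 f2 f3 f4 by blast
        qed
      qed
    qed
    show ?thesis using part1 part2 by blast
  qed
qed

end
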